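(* Let $J\subset S$ be a saturated Borel ideal with Hilbert polynomial $p(z)=p_{S/J}(z)$ and Gotzmann number $r$. Let $I=J_{x_0x_1}$ be the $x_1$-saturation of $J$ and let $q:=\dim_K I_r-\dim_K J_r$. Then (i) $p_{S/I}(z)=p(z)-q$; (ii) $q$ equals the sum, over all minimal monomial generators of $J$, of the exponent of $x_1$ in that generator.
   Context: $S=K[x_0,\dots,x_n]$, $K$ algebraically closed of characteristic $0$, standard grading, $x_0<x_1<\dots<x_n$. A monomial ideal is Borel if $x^\alpha\in J$, $\alpha_j>0$, $j<n$ imply $x^\alpha x_{j+1}/x_j\in J$. For a Borel ideal $J$, its $x_1$-saturation $J_{x_0x_1}$ is the (Borel) ideal of $S$ generated by the terms obtained by setting $x_0=x_1=1$ in the minimal monomial generators of $J$ (its saturation $J^{sat}$ is obtained by setting $x_0=1$). Gotzmann number: every admissible (Hilbert) polynomial is uniquely $p(z)=\sum_{i=1}^r\binom{z+a_i-(i-1)}{a_i}$ with $a_1\ge\dots\ge a_r\ge 0$, and $r$ is its Gotzmann number. *)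

theory Defs
  imports Complex_Main "HOL-Computational_Algebra.Polynomial"
begin

text \<open>Monomials of S = K[x_0,...,x_n] are exponent vectors a :: nat => nat with a i = 0 for i > n.
A monomial ideal is represented by the set of monomials it contains (which is a K-basis of it).\<close>

definition mons :: "nat \<Rightarrow> (nat \<Rightarrow> nat) set" where
  "mons n = {a. \<forall>i>n. a i = 0}"

definition mdeg :: "nat \<Rightarrow> (nat \<Rightarrow> nat) \<Rightarrow> nat" where
  "mdeg n a = (\<Sum>i\<le>n. a i)"

definition mon_ideal :: "nat \<Rightarrow> (nat \<Rightarrow> nat) set \<Rightarrow> bool" where
  "mon_ideal n J \<longleftrightarrow> J \<subseteq> mons n \<and> (\<forall>a\<in>J. \<forall>b\<in>mons n. (\<lambda>i. a i + b i) \<in> J)"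

definition gen_ideal :: "nat \<Rightarrow> (nat \<Rightarrow> nat) set \<Rightarrow> (nat \<Rightarrow> nat) set" where
  "gen_ideal n G = {b \<in> mons n. \<exists>g\<in>G. g \<le> b}"

definition min_gens :: "(nat \<Rightarrow> nat) set \<Rightarrow> (nat \<Rightarrow> nat) set" where
  "min_gens J = {a \<in> J. \<forall>b\<in>J. b \<le> a \<longrightarrow> b = a}"

definition borel :: "nat \<Rightarrow> (nat \<Rightarrow> nat) set \<Rightarrow> bool" where
  "borel n J \<longleftrightarrow> mon_ideal n J \<and>
     (\<forall>a\<in>J. \<forall>j<n. a j > 0 \<longrightarrow> a(j := a j - 1, Suc j := a (Suc j) + 1) \<in> J)"

text \<open>saturation: set x_0 = 1 in the minimal generators\<close>
definition sat :: "nat \<Rightarrow> (nat \<Rightarrow> nat) set \<Rightarrow> (nat \<Rightarrow> nat) set" where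
  "sat n J = gen_ideal n ((\<lambda>a. a(0 := 0)) ` min_gens J)"

text \<open>x_1-saturation J_{x_0 x_1}: set x_0 = x_1 = 1 in the minimal generators\<close>
definition sat01 :: "nat \<Rightarrow> (nat \<Rightarrow> nat) set \<Rightarrow> (nat \<Rightarrow> nat) set" where
  "sat01 n J = gen_ideal n ((\<lambda>a. a(0 := 0, 1 := 0)) ` min_gens J)"

definition dim_deg :: "nat \<Rightarrow> (nat \<Rightarrow> nat) set \<Rightarrow> nat \<Rightarrow> nat" where
  "dim_deg n J z = card {a \<in> J. mdeg n a = z}"

definition hilb_fun :: "nat \<Rightarrow> (nat \<Rightarrow> nat) set \<Rightarrow> nat \<Rightarrow> nat" where
  "hilb_fun n J z = card {a \<in> mons n - J. mdeg n a = z}"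

definition is_hilb_poly :: "nat \<Rightarrow> (nat \<Rightarrow> nat) set \<Rightarrow> real poly \<Rightarrow> bool" where
  "is_hilb_poly n J p \<longleftrightarrow> (\<forall>\<^sub>F z in sequentially. real (hilb_fun n J z) = poly p (real z))"

text \<open>r is the Gotzmann number of p: p(z) = sum_{i=1}^r binom(z + a_i - (i-1), a_i),
  a_1 >= ... >= a_r >= 0 (identity of polynomials, equivalently for all large z)\<close>
definition gotzmann_number :: "real poly \<Rightarrow> nat \<Rightarrow> bool" where
  "gotzmann_number p r \<longleftrightarrow> (\<exists>a :: nat \<Rightarrow> nat.
     (\<forall>i j. 1 \<le> i \<longrightarrow> i \<le> j \<longrightarrow> j \<le> r \<longrightarrow> a j \<le> a i) \<and>
     (\<forall>\<^sub>F z in sequentially. poly p (real z) =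
        (\<Sum>i=1..r. real ((z + a i - (i - 1)) choose (a i)))))"

end

theory Submission
  imports Defs
begin


lemma mons_le: "b \<in> mons n \<Longrightarrow> (a::nat\<Rightarrow>nat) \<le> b \<Longrightarrow> a \<in> mons n"
proof -
  assume b: "b \<in> mons n" and le: "a \<le> b"
  have "a i = 0" if "i > n" for i
  proof -
    have "b i = 0" using b that unfolding mons_def by auto
    moreover have "a i \<le> b i" using le unfolding le_fun_def by auto
    ultimately show ?thesis by simp
  qed
  then show ?thesis unfolding mons_def by auto
qed

lemma mdeg_mono: "(a::nat\<Rightarrow>nat) \<le> b \<Longrightarrow> mdeg n a \<le> mdeg n b"
  unfolding mdeg_def le_fun_def by (simp add: sum_mono)

lemma mdeg_strict: "b \<in> mons n \<Longrightarrow> (a::nat\<Rightarrow>nat) \<le> b \<Longrightarrow> a \<noteq> b \<Longrightarrow> mdeg n a < mdeg n b"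
proof -
  assume b: "b \<in> mons n" and le: "a \<le> b" and ne: "a \<noteq> b"
  then obtain i where i: "a i \<noteq> b i" by (auto simp: fun_eq_iff)
  have a: "a \<in> mons n" using mons_le b le by blast
  have "i \<le> n"
  proof (rule ccontr)
    assume "\<not> i \<le> n"
    then have "a i = 0" "b i = 0" using a b unfolding mons_def by auto
    then show False using i by simp
  qed
  moreover have "a i < b i" using le i unfolding le_fun_def using le_neq_implies_less by blast
  ultimately show ?thesis unfolding mdeg_def using le unfolding le_fun_def
    by (intro sum_strict_mono_ex1) auto
qed

lemma mdeg_upd: "j \<le> n \<Longrightarrow> mdeg n (a(j := x)) + a j = mdeg n a + x"
proof -
  assume j: "j \<le> n"
  have "mdeg n (a(j := x)) = x + (\<Sum>i\<in>{..n} - {j}. (a(j := x)) i)"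
    unfolding mdeg_def using j by (subst sum.remove[of _ j]) auto
  also have "(\<Sum>i\<in>{..n} - {j}. (a(j := x)) i) = (\<Sum>i\<in>{..n} - {j}. a i)"
    by (rule sum.cong) auto
  finally have 1: "mdeg n (a(j := x)) = x + (\<Sum>i\<in>{..n} - {j}. a i)" .
  have "mdeg n a = a j + (\<Sum>i\<in>{..n} - {j}. a i)"
    unfolding mdeg_def using j by (subst sum.remove[of _ j]) auto
  with 1 show ?thesis by simp
qed

lemma mono_ideal_up: "mon_ideal n J \<Longrightarrow> a \<in> J \<Longrightarrow> a \<le> c \<Longrightarrow> c \<in> mons n \<Longrightarrow> c \<in> J"
proof -
  assume J: "mon_ideal n J" and a: "a \<in> J" and le: "a \<le> c" and c: "c \<in> mons n"
  have "(\<lambda>i. c i - a i) \<in> mons n" using c unfolding mons_def by auto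
  moreover have "\<forall>a\<in>J. \<forall>b\<in>mons n. (\<lambda>i. a i + b i) \<in> J" using J unfolding mon_ideal_def by simp
  ultimately have "(\<lambda>i. a i + (c i - a i)) \<in> J" using a by simp
  moreover have "(\<lambda>i. a i + (c i - a i)) = c" using le unfolding le_fun_def by (auto simp: fun_eq_iff)
  ultimately show ?thesis by simp
qed

lemma finite_mons_deg: "finite {a \<in> mons n. mdeg n a \<le> B}"
proof -
  let ?f = "\<lambda>a::nat\<Rightarrow>nat. map a [0..<Suc n]"
  have inj: "inj_on ?f (mons n)"
  proof
    fix a b assume a: "a \<in> mons n" and b: "b \<in> mons n" and e: "?f a = ?f b"
    show "a = b"
    proof
      fix i show "a i = b i"
      proof (cases "i \<le> n")
        case True
        have "?f a ! i = ?f b ! i" by (simp only: e)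
        moreover have "i < Suc n - 0" using True by simp
        ultimately show ?thesis by (simp only: nth_map_upt add_0)
      next
        case False then show ?thesis using a b unfolding mons_def by auto
      qed
    qed
  qed
  have "?f ` {a \<in> mons n. mdeg n a \<le> B} \<subseteq> {xs. set xs \<subseteq> {..B} \<and> length xs = Suc n}"
  proof
    fix xs assume "xs \<in> ?f ` {a \<in> mons n. mdeg n a \<le> B}"
    then obtain a where a: "a \<in> mons n" "mdeg n a \<le> B" and xs: "xs = ?f a" by blast
    have "\<forall>x\<le>n. a x \<le> B"
    proof (intro allI impI)
      fix x assume "x \<le> n"
      then have "a x \<le> mdeg n a" unfolding mdeg_def by (intro member_le_sum) auto
      then show "a x \<le> B" using a by linarith
    qed
    then show "xs \<in> {xs. set xs \<subseteq> {..B} \<and> length xs = Suc n}" using xs by auto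
  qed
  then have "finite (?f ` {a \<in> mons n. mdeg n a \<le> B})"
    using finite_lists_length_eq[of "{..B}" "Suc n"] finite_subset by blast
  moreover have "inj_on ?f {a \<in> mons n. mdeg n a \<le> B}" using inj by (rule inj_on_subset) auto
  ultimately show ?thesis by (rule finite_imageD)
qed



lemma mon_ideal_sub: "mon_ideal n J \<Longrightarrow> J \<subseteq> mons n"
  unfolding mon_ideal_def by simp

lemma exists_min_gen:
  assumes J: "mon_ideal n J" and b: "b \<in> J"
  shows "\<exists>g\<in>min_gens J. g \<le> b"
proof -
  have bm: "b \<in> mons n" using J b mon_ideal_sub by auto
  let ?S = "{g \<in> J. g \<le> b}"
  have "b \<in> ?S" using b by simp
  then obtain g where g: "g \<in> ?S" and gmin: "\<And>h. h \<in> ?S \<Longrightarrow> mdeg n g \<le> mdeg n h"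
    using ex_min_if_finite[of "mdeg n ` ?S"] arg_min_nat_lemma[of "\<lambda>g. g \<in> ?S" b "mdeg n"]
    by blast
  have "g \<in> min_gens J"
    unfolding min_gens_def
  proof (intro CollectI conjI ballI impI)
    show "g \<in> J" using g by simp
    fix h assume h: "h \<in> J" "h \<le> g"
    have "h \<in> ?S" using h g order_trans by auto
    then have "mdeg n g \<le> mdeg n h" by (rule gmin)
    moreover have gm: "g \<in> mons n" using g bm mons_le by auto
    ultimately show "h = g" using mdeg_strict[OF gm h(2)] by linarith
  qed
  then show ?thesis using g by auto
qed

definition satb :: "nat \<Rightarrow> (nat \<Rightarrow> nat) set \<Rightarrow> bool" where
  "satb n J \<longleftrightarrow> borel n J \<and> (\<forall>b\<in>J. b(0 := 0) \<in> J)"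

lemma borel_mon: "borel n J \<Longrightarrow> mon_ideal n J"
  unfolding borel_def by simp

lemma sat_imp_satb:
  assumes B: "borel n J" and S: "sat n J = J"
  shows "satb n J"
  unfolding satb_def
proof (intro conjI ballI)
  show "borel n J" by (rule B)
  fix b assume b: "b \<in> J"
  have J: "mon_ideal n J" using B borel_mon by auto
  obtain g where g: "g \<in> min_gens J" "g \<le> b" using exists_min_gen[OF J b] by blast
  have bm: "b \<in> mons n" using J b mon_ideal_sub by auto
  have "g(0:=0) \<le> b(0:=0)" using g(2) unfolding le_fun_def by auto
  moreover have "b(0:=0) \<in> mons n" using bm unfolding mons_def by auto
  ultimately have "b(0:=0) \<in> sat n J" unfolding sat_def gen_ideal_def using g(1) by blast
  then show "b(0:=0) \<in> J" using S by simp
qed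

lemma satb_mon: "satb n J \<Longrightarrow> mon_ideal n J"
  unfolding satb_def borel_def by simp

lemma satb_sub: "satb n J \<Longrightarrow> J \<subseteq> mons n"
  using satb_mon mon_ideal_sub by blast

lemma satb_up: "satb n J \<Longrightarrow> a \<in> J \<Longrightarrow> a \<le> c \<Longrightarrow> c \<in> mons n \<Longrightarrow> c \<in> J"
  using satb_mon mono_ideal_up by blast

lemma satb_x0: "satb n J \<Longrightarrow> b \<in> J \<Longrightarrow> b(0:=0) \<in> J"
  unfolding satb_def by simp

lemma satb_x0_iff: "satb n J \<Longrightarrow> b \<in> mons n \<Longrightarrow> b(0:=0) \<in> J \<longleftrightarrow> b \<in> J"
proof
  assume s: "satb n J" and b: "b \<in> mons n" and "b(0:=0) \<in> J"
  moreover have "b(0:=0) \<le> b" unfolding le_fun_def by auto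
  ultimately show "b \<in> J" using satb_up by blast
qed (rule satb_x0)

lemma min_gen_x0:
  assumes s: "satb n J" and g: "g \<in> min_gens J"
  shows "g 0 = 0"
proof -
  have gJ: "g \<in> J" using g unfolding min_gens_def by simp
  have "g(0:=0) \<in> J" using satb_x0[OF s gJ] .
  moreover have "g(0:=0) \<le> g" unfolding le_fun_def by auto
  ultimately have "g(0:=0) = g" using g unfolding min_gens_def by blast
  then show ?thesis by (metis fun_upd_same)
qed

lemma borel_step: "borel n J \<Longrightarrow> b \<in> J \<Longrightarrow> j < n \<Longrightarrow> b j > 0 \<Longrightarrow>
   b(j := b j - 1, Suc j := b (Suc j) + 1) \<in> J"
  unfolding borel_def by blast

lemma borel_move1:
  assumes B: "borel n J" and b: "b \<in> J" and ij: "i < j" "j \<le> n" and bi: "b i > 0"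
  shows "b(i := b i - 1, j := b j + 1) \<in> J"
  using ij
proof (induction j)
  case 0 then show ?case by simp
next
  case (Suc j)
  show ?case
  proof (cases "j = i")
    case True
    have "i < n" using Suc.prems True by simp
    from borel_step[OF B b this bi] show ?thesis unfolding True .
  next
    case False
    then have ij': "i < j" "j \<le> n" using Suc.prems by auto
    let ?b = "b(i := b i - 1, j := b j + 1)"
    have bJ: "?b \<in> J" using Suc.IH[OF ij'(1) ij'(2)] .
    have "?b j > 0" using ij' by simp
    have "j < n" using ij' Suc.prems by simp
    have mem: "?b(j := ?b j - 1, Suc j := ?b (Suc j) + 1) \<in> J"
      using borel_step[OF B bJ \<open>j < n\<close> \<open>?b j > 0\<close>] .
    have eq: "?b(j := ?b j - 1, Suc j := ?b (Suc j) + 1) = b(i := b i - 1, Suc j := b (Suc j) + 1)"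
      using ij' by (auto simp: fun_eq_iff)
    show ?thesis using mem unfolding eq .
  qed
qed

lemma borel_moveK:
  assumes B: "borel n J" and ij: "i < j" "j \<le> n"
  shows "b \<in> J \<Longrightarrow> k \<le> b i \<Longrightarrow> b(i := b i - k, j := b j + k) \<in> J"
proof (induction k)
  case 0 then show ?case by simp
next
  case (Suc k)
  let ?b = "b(i := b i - k, j := b j + k)"
  have "k \<le> b i" using Suc.prems by simp
  then have bJ: "?b \<in> J" using Suc.IH Suc.prems(1) by blast
  have "?b i > 0" using Suc.prems ij by simp
  have mem: "?b(i := ?b i - 1, j := ?b j + 1) \<in> J"
    using borel_move1[OF B bJ ij \<open>?b i > 0\<close>] .
  have eq: "?b(i := ?b i - 1, j := ?b j + 1) = b(i := b i - Suc k, j := b j + Suc k)"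
    using ij by (auto simp: fun_eq_iff)
  show ?case using mem unfolding eq .
qed



definition up :: "(nat \<Rightarrow> nat) \<Rightarrow> nat \<Rightarrow> nat" where
  "up c = (\<lambda>i. if i = 0 then 0 else c (i - 1))"
definition down :: "(nat \<Rightarrow> nat) \<Rightarrow> nat \<Rightarrow> nat" where
  "down b = (\<lambda>i. b (Suc i))"
definition I01 :: "nat \<Rightarrow> (nat \<Rightarrow> nat) set \<Rightarrow> (nat \<Rightarrow> nat) set" where
  "I01 n J = {b \<in> mons n. \<exists>k. b(1 := k) \<in> J}"
definition Itil :: "nat \<Rightarrow> (nat \<Rightarrow> nat) set \<Rightarrow> (nat \<Rightarrow> nat) set" where
  "Itil m I = {c \<in> mons m. up c \<in> I}"
definition FF :: "nat \<Rightarrow> (nat \<Rightarrow> nat) set \<Rightarrow> (nat \<Rightarrow> nat) set" where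
  "FF n J = {b \<in> I01 n J - J. b 0 = 0}"

lemma down_up[simp]: "down (up c) = c"
  unfolding up_def down_def by auto
lemma down_up_upd[simp]: "down ((up c)(0 := x)) = c"
  unfolding up_def down_def by auto
lemma up_down: "up (down b) = b(0 := 0)"
  unfolding up_def down_def by (auto simp: fun_eq_iff)

lemma mdeg_Suc: "mdeg (Suc m) b = b 0 + mdeg m (down b)"
  unfolding mdeg_def down_def by (rule sum.atMost_Suc_shift)

lemma mdeg_up: "mdeg (Suc m) (up c) = mdeg m c"
proof -
  have "up c 0 = 0" by (simp add: up_def)
  then show ?thesis using mdeg_Suc[of m "up c"] by simp
qed

lemma up_mons: "c \<in> mons m \<Longrightarrow> up c \<in> mons (Suc m)"
  unfolding mons_def up_def by auto
lemma down_mons: "b \<in> mons (Suc m) \<Longrightarrow> down b \<in> mons m"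
  unfolding mons_def down_def by auto

lemma sat01_eq:
  assumes s: "satb n J"
  shows "sat01 n J = I01 n J"
proof
  show "sat01 n J \<subseteq> I01 n J"
  proof
    fix b assume "b \<in> sat01 n J"
    then obtain g where b: "b \<in> mons n" and g: "g \<in> min_gens J" and le: "g(0 := 0, 1 := 0) \<le> b"
      unfolding sat01_def gen_ideal_def by blast
    have g0: "g 0 = 0" using min_gen_x0[OF s g] .
    have gJ: "g \<in> J" using g unfolding min_gens_def by simp
    have "g i \<le> (b(1 := g 1 + b 1)) i" for i
    proof (cases "i = 0 \<or> i = 1")
      case True then show ?thesis using g0 by auto
    next
      case False
      then have "(g(0 := 0, 1 := 0)) i = g i" by simp
      then show ?thesis using le False unfolding le_fun_def by (metis fun_upd_other)
    qed
    then have "g \<le> b(1 := g 1 + b 1)" unfolding le_fun_def by blast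
    moreover have "b(1 := g 1 + b 1) \<in> mons n" using b unfolding mons_def
      using satb_sub[OF s] gJ unfolding mons_def by auto
    ultimately have "b(1 := g 1 + b 1) \<in> J" using satb_up[OF s gJ] by blast
    then show "b \<in> I01 n J" using b unfolding I01_def by blast
  qed
next
  show "I01 n J \<subseteq> sat01 n J"
  proof
    fix b assume "b \<in> I01 n J"
    then obtain k where b: "b \<in> mons n" and bk: "b(1 := k) \<in> J" unfolding I01_def by blast
    obtain g where g: "g \<in> min_gens J" "g \<le> b(1 := k)"
      using exists_min_gen[OF satb_mon[OF s] bk] by blast
    have "(g(0 := 0, 1 := 0)) i \<le> b i" for i
    proof (cases "i = 0 \<or> i = 1")
      case True then show ?thesis by auto
    next
      case False
      then have "(g(0 := 0, 1 := 0)) i = g i" "(b(1:=k)) i = b i" by simp_all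
      then show ?thesis using g(2) unfolding le_fun_def by metis
    qed
    then have "g(0 := 0, 1 := 0) \<le> b" unfolding le_fun_def by blast
    then show "b \<in> sat01 n J" unfolding sat01_def gen_ideal_def using b g(1) by blast
  qed
qed



lemma upd_mons: "b \<in> mons n \<Longrightarrow> j \<le> n \<Longrightarrow> b(j := x) \<in> mons n"
  unfolding mons_def by auto

context
  fixes m :: nat and J :: "(nat \<Rightarrow> nat) set"
  assumes s: "satb (Suc m) J"
begin

lemma J_sub_I: "J \<subseteq> I01 (Suc m) J"
proof
  fix b assume b: "b \<in> J"
  then have "b(1 := b 1) \<in> J" by simp
  then show "b \<in> I01 (Suc m) J" unfolding I01_def using b satb_sub[OF s] by blast
qed

lemma I_sub: "I01 (Suc m) J \<subseteq> mons (Suc m)"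
  unfolding I01_def by auto

lemma I_x1: "b \<in> I01 (Suc m) J \<Longrightarrow> b(1 := x) \<in> I01 (Suc m) J"
  unfolding I01_def using upd_mons[of b "Suc m" 1 x] by auto

lemma I_up: assumes a: "a \<in> I01 (Suc m) J" and le: "a \<le> c" and c: "c \<in> mons (Suc m)"
  shows "c \<in> I01 (Suc m) J"
proof -
  obtain k where k: "a(1 := k) \<in> J" using a unfolding I01_def by blast
  have "a(1 := k) \<le> c(1 := k + c 1)" using le unfolding le_fun_def by auto
  moreover have "c(1 := k + c 1) \<in> mons (Suc m)" using upd_mons[OF c] by simp
  ultimately have "c(1 := k + c 1) \<in> J" using satb_up[OF s k] by blast
  then show ?thesis unfolding I01_def using c by blast
qed

lemma I_x0: "b \<in> I01 (Suc m) J \<Longrightarrow> b(0 := 0) \<in> I01 (Suc m) J"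
proof -
  assume b: "b \<in> I01 (Suc m) J"
  then obtain k where k: "b(1 := k) \<in> J" unfolding I01_def by blast
  have "(b(1 := k))(0 := 0) \<in> J" using satb_x0[OF s k] .
  moreover have "(b(1 := k))(0 := 0) = (b(0 := 0))(1 := k)" by (auto simp: fun_eq_iff)
  ultimately have "(b(0 := 0))(1 := k) \<in> J" by simp
  moreover have "b(0 := 0) \<in> mons (Suc m)" using b I_sub upd_mons by blast
  ultimately show ?thesis unfolding I01_def by blast
qed

lemma I_mon: "mon_ideal (Suc m) (I01 (Suc m) J)"
  unfolding mon_ideal_def
proof (intro conjI ballI)
  show "I01 (Suc m) J \<subseteq> mons (Suc m)" by (rule I_sub)
  fix a b assume a: "a \<in> I01 (Suc m) J" and b: "b \<in> mons (Suc m)"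
  have am: "a \<in> mons (Suc m)" using a I_sub by blast
  have "a \<le> (\<lambda>i. a i + b i)" unfolding le_fun_def by simp
  moreover have "(\<lambda>i. a i + b i) \<in> mons (Suc m)" using am b unfolding mons_def by simp
  ultimately show "(\<lambda>i. a i + b i) \<in> I01 (Suc m) J" using I_up[OF a] by blast
qed

lemma I_satb: "satb (Suc m) (I01 (Suc m) J)"
  unfolding satb_def borel_def
proof (intro conjI ballI allI impI)
  show "mon_ideal (Suc m) (I01 (Suc m) J)" by (rule I_mon)
  fix b assume b: "b \<in> I01 (Suc m) J"
  then show "b(0 := 0) \<in> I01 (Suc m) J" by (rule I_x0)
  fix j assume j: "j < Suc m" and bj: "0 < b j"
  have bm: "b \<in> mons (Suc m)" using b I_sub by blast
  let ?b = "b(j := b j - 1, Suc j := b (Suc j) + 1)"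
  have bm': "?b \<in> mons (Suc m)" using bm j unfolding mons_def by auto
  obtain k where k: "b(1 := k) \<in> J" using b unfolding I01_def by blast
  have B: "borel (Suc m) J" using s unfolding satb_def by simp
  show "?b \<in> I01 (Suc m) J"
  proof (cases "j = 0")
    case True
    have "(b(1:=k))(0 := 0) \<in> J" using satb_x0[OF s k] .
    moreover have "(b(1:=k))(0 := 0) \<le> ?b(1 := k)" using True unfolding le_fun_def by auto
    moreover have "?b(1 := k) \<in> mons (Suc m)" using upd_mons[OF bm'] by simp
    ultimately have "?b(1 := k) \<in> J" using satb_up[OF s] by blast
    then show ?thesis unfolding I01_def using bm' by blast
  next
    case False
    show ?thesis
    proof (cases "j = 1")
      case True
      have "b(1 := k) \<le> ?b(1 := k)" using True unfolding le_fun_def by auto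
      moreover have "?b(1 := k) \<in> mons (Suc m)" using upd_mons[OF bm'] by simp
      ultimately have "?b(1 := k) \<in> J" using satb_up[OF s k] by blast
      then show ?thesis unfolding I01_def using bm' by blast
    next
      case False2: False
      have "(b(1:=k)) j > 0" using bj False2 by simp
      then have "(b(1:=k))(j := (b(1:=k)) j - 1, Suc j := (b(1:=k)) (Suc j) + 1) \<in> J"
        using borel_step[OF B k j] by blast
      moreover have "(b(1:=k))(j := (b(1:=k)) j - 1, Suc j := (b(1:=k)) (Suc j) + 1) = ?b(1 := k)"
        using False False2 by (auto simp: fun_eq_iff)
      ultimately have "?b(1 := k) \<in> J" by simp
      then show ?thesis unfolding I01_def using bm' by blast
    qed
  qed
qed

lemma Itil_satb: "satb m (Itil m (I01 (Suc m) J))"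
  unfolding satb_def borel_def mon_ideal_def
proof (intro conjI ballI allI impI)
  let ?I = "I01 (Suc m) J"
  show "Itil m ?I \<subseteq> mons m" unfolding Itil_def by auto
  fix c assume c: "c \<in> Itil m ?I"
  then have cm: "c \<in> mons m" and cI: "up c \<in> ?I" unfolding Itil_def by auto
  {
    fix d assume d: "d \<in> mons m"
    have "up c \<le> up (\<lambda>i. c i + d i)" unfolding le_fun_def up_def by auto
    moreover have cdm: "(\<lambda>i. c i + d i) \<in> mons m" using cm d unfolding mons_def by auto
    moreover have "up (\<lambda>i. c i + d i) \<in> mons (Suc m)" using up_mons[OF cdm] .
    ultimately have "up (\<lambda>i. c i + d i) \<in> ?I" using I_up[OF cI] by blast
    with cdm show "(\<lambda>i. c i + d i) \<in> Itil m ?I" unfolding Itil_def by blast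
  }
  {
    have "up (c(0 := 0)) = (up c)(1 := 0)" unfolding up_def by (auto simp: fun_eq_iff)
    moreover have "(up c)(1 := 0) \<in> ?I" using I_x1[OF cI] .
    moreover have "c(0 := 0) \<in> mons m" using cm unfolding mons_def by auto
    ultimately show "c(0 := 0) \<in> Itil m ?I" unfolding Itil_def by simp
  }
  {
    fix j assume j: "j < m" and cj: "0 < c j"
    let ?c = "c(j := c j - 1, Suc j := c (Suc j) + 1)"
    have BI: "borel (Suc m) ?I" using I_satb unfolding satb_def by simp
    have "(up c) (Suc j) > 0" using cj by (simp add: up_def)
    moreover have "Suc j < Suc m" using j by simp
    ultimately have "(up c)(Suc j := (up c) (Suc j) - 1, Suc (Suc j) := (up c) (Suc (Suc j)) + 1) \<in> ?I"
      using borel_step[OF BI cI] by blast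
    moreover have "(up c)(Suc j := (up c) (Suc j) - 1, Suc (Suc j) := (up c) (Suc (Suc j)) + 1) = up ?c"
      unfolding up_def by (auto simp: fun_eq_iff)
    ultimately have "up ?c \<in> ?I" by simp
    moreover have "?c \<in> mons m" using cm j unfolding mons_def by auto
    ultimately show "?c \<in> Itil m ?I" unfolding Itil_def by blast
  }
qed

end


lemma finite_deg_eq: "finite {a \<in> X. a \<in> mons n \<and> mdeg n a = d}"
  by (rule finite_subset[OF _ finite_mons_deg[of n d]]) auto

lemma finite_deg_sub: "X \<subseteq> mons n \<Longrightarrow> finite {a \<in> X. mdeg n a = d}"
  by (rule finite_subset[OF _ finite_mons_deg[of n d]]) auto

lemma finite_deg_le_sub: "X \<subseteq> mons n \<Longrightarrow> finite {a \<in> X. mdeg n a \<le> d}"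
  by (rule finite_subset[OF _ finite_mons_deg[of n d]]) auto

lemma interpolate:
  assumes f: "f \<in> mons n" and wf: "w \<le> f"
  shows "mdeg n w + k \<le> mdeg n f \<Longrightarrow> \<exists>v. w \<le> v \<and> v \<le> f \<and> mdeg n v = mdeg n w + k"
proof (induction k)
  case 0 then show ?case using wf by auto
next
  case (Suc k)
  then obtain v where v: "w \<le> v" "v \<le> f" "mdeg n v = mdeg n w + k" by auto
  then have "v \<noteq> f" using Suc.prems by auto
  then obtain i where i: "v i \<noteq> f i" by (auto simp: fun_eq_iff)
  have vm: "v \<in> mons n" using mons_le[OF f v(2)] .
  have lt: "v i < f i" using i v(2) unfolding le_fun_def using le_neq_implies_less by blast
  have "i \<le> n"
  proof (rule ccontr)
    assume "\<not> i \<le> n" then have "v i = 0" "f i = 0" using vm f unfolding mons_def by auto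
    then show False using i by simp
  qed
  let ?v = "v(i := v i + 1)"
  have "w \<le> ?v" using v(1) unfolding le_fun_def by (simp add: le_SucI)
  moreover have "?v \<le> f" using v(2) lt unfolding le_fun_def by auto
  moreover have "mdeg n ?v = mdeg n w + Suc k" using mdeg_upd[OF \<open>i \<le> n\<close>, of v "v i + 1"] v(3) by simp
  ultimately show ?case by blast
qed

lemma interpolate':
  assumes f: "f \<in> mons n" and wf: "w \<le> f" and e: "mdeg n w \<le> e" "e \<le> mdeg n f"
  shows "\<exists>v. w \<le> v \<and> v \<le> f \<and> mdeg n v = e"
  using interpolate[OF f wf, of "e - mdeg n w"] e by auto

lemma card_degs:
  assumes fin: "finite S" and ex: "\<And>e. lo \<le> e \<Longrightarrow> e \<le> hi \<Longrightarrow> \<exists>v\<in>S. deg v = e"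
  shows "hi + 1 - lo \<le> card S"
proof -
  have "{lo..hi} \<subseteq> deg ` S" using ex by force
  then have "card {lo..hi} \<le> card (deg ` S)" using fin by (intro card_mono) auto
  also have "\<dots> \<le> card S" using fin by (rule card_image_le)
  finally show ?thesis by simp
qed

context
  fixes m :: nat and J :: "(nat \<Rightarrow> nat) set"
  assumes s: "satb (Suc m) J"
begin

lemma HF_I:
  "hilb_fun (Suc m) (I01 (Suc m) J) d = (\<Sum>e\<le>d. hilb_fun m (Itil m (I01 (Suc m) J)) e)"
proof -
  let ?I = "I01 (Suc m) J"
  let ?T = "Itil m ?I"
  let ?A = "{a \<in> mons (Suc m) - ?I. mdeg (Suc m) a = d}"
  let ?B = "\<lambda>e. {c \<in> mons m - ?T. mdeg m c = e}"
  let ?f = "\<lambda>b. (d - b 0, down b)"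
  let ?g = "\<lambda>(e, c). (up c)(0 := d - e)"
  have memI: "b \<in> ?I \<longleftrightarrow> down b \<in> ?T" if b: "b \<in> mons (Suc m)" for b
  proof -
    have "down b \<in> ?T \<longleftrightarrow> b(0 := 0) \<in> ?I" unfolding Itil_def using down_mons[OF b] up_down by simp
    also have "\<dots> \<longleftrightarrow> b \<in> ?I" using satb_x0_iff[OF I_satb[OF s] b] .
    finally show ?thesis by simp
  qed
  have "bij_betw ?f ?A (Sigma {..d} ?B)"
  proof (rule bij_betw_byWitness[where f' = ?g])
    show "\<forall>a\<in>?A. ?g (?f a) = a"
    proof
      fix a assume a: "a \<in> ?A"
      have "a 0 \<le> d" using a mdeg_Suc[of m a] by auto
      then show "?g (?f a) = a" by (auto simp: up_down fun_eq_iff)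
    qed
    show "\<forall>a'\<in>Sigma {..d} ?B. ?f (?g a') = a'" by auto
    show "?f ` ?A \<subseteq> Sigma {..d} ?B"
    proof
      fix x assume "x \<in> ?f ` ?A"
      then obtain a where a: "a \<in> ?A" and x: "x = ?f a" by blast
      have am: "a \<in> mons (Suc m)" using a by simp
      have "mdeg m (down a) = d - a 0" using a mdeg_Suc[of m a] by auto
      moreover have "down a \<in> mons m" using down_mons[OF am] .
      moreover have "down a \<notin> ?T" using a memI[OF am] by simp
      ultimately show "x \<in> Sigma {..d} ?B" using x by auto
    qed
    show "?g ` Sigma {..d} ?B \<subseteq> ?A"
    proof
      fix x assume "x \<in> ?g ` Sigma {..d} ?B"
      then obtain e c where e: "e \<le> d" and c: "c \<in> mons m" "c \<notin> ?T" "mdeg m c = e"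
        and x: "x = (up c)(0 := d - e)" by auto
      have xm: "x \<in> mons (Suc m)" using x upd_mons[OF up_mons[OF c(1)]] by simp
      have "down x = c" using x by simp
      then have "x \<notin> ?I" using memI[OF xm] c(2) by simp
      moreover have "mdeg (Suc m) x = d" using mdeg_Suc[of m x] \<open>down x = c\<close> c(3) e x by simp
      ultimately show "x \<in> ?A" using xm by simp
    qed
  qed
  then have "card ?A = card (Sigma {..d} ?B)" by (rule bij_betw_same_card)
  also have "\<dots> = (\<Sum>e\<le>d. card (?B e))"
  proof (rule card_SigmaI)
    show "finite {..d}" by simp
    show "\<forall>e\<in>{..d}. finite (?B e)" by (intro ballI finite_deg_sub) auto
  qed
  finally show ?thesis unfolding hilb_fun_def by simp
qed

lemma HF_J:
  "hilb_fun (Suc m) J d = hilb_fun (Suc m) (I01 (Suc m) J) d + card {b \<in> I01 (Suc m) J - J. mdeg (Suc m) b = d}"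
proof -
  let ?I = "I01 (Suc m) J"
  have "{a \<in> mons (Suc m) - J. mdeg (Suc m) a = d} =
     {a \<in> mons (Suc m) - ?I. mdeg (Suc m) a = d} \<union> {b \<in> ?I - J. mdeg (Suc m) b = d}"
    using I_sub[OF s] J_sub_I[OF s] by auto
  moreover have "finite {a \<in> mons (Suc m) - ?I. mdeg (Suc m) a = d}" by (rule finite_deg_sub) auto
  moreover have "finite {b \<in> ?I - J. mdeg (Suc m) b = d}" by (rule finite_deg_sub) (use I_sub[OF s] in auto)
  ultimately show ?thesis unfolding hilb_fun_def by (simp add: card_Un_disjoint disjoint_iff)
qed

lemma FF_sub: "FF (Suc m) J \<subseteq> mons (Suc m)"
  unfolding FF_def using I_sub[OF s] by auto

lemma card_IJ:
  "card {b \<in> I01 (Suc m) J - J. mdeg (Suc m) b = d} = card {f \<in> FF (Suc m) J. mdeg (Suc m) f \<le> d}"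
proof -
  let ?I = "I01 (Suc m) J"
  let ?A = "{b \<in> ?I - J. mdeg (Suc m) b = d}"
  let ?B = "{f \<in> FF (Suc m) J. mdeg (Suc m) f \<le> d}"
  have x0I: "b(0:=0) \<in> ?I \<longleftrightarrow> b \<in> ?I" if "b \<in> mons (Suc m)" for b
    using satb_x0_iff[OF I_satb[OF s] that] .
  have x0J: "b(0:=0) \<in> J \<longleftrightarrow> b \<in> J" if "b \<in> mons (Suc m)" for b
    using satb_x0_iff[OF s that] .
  have "bij_betw (\<lambda>b. b(0 := 0)) ?A ?B"
  proof (rule bij_betw_byWitness[where f' = "\<lambda>f. f(0 := d - mdeg (Suc m) f)"])
    show "\<forall>a\<in>?A. (a(0 := 0))(0 := d - mdeg (Suc m) (a(0 := 0))) = a"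
    proof
      fix a assume a: "a \<in> ?A"
      have "mdeg (Suc m) (a(0:=0)) + a 0 = mdeg (Suc m) a" using mdeg_upd[of 0 "Suc m" a 0] by simp
      then show "(a(0 := 0))(0 := d - mdeg (Suc m) (a(0 := 0))) = a" using a by (auto simp: fun_eq_iff)
    qed
    show "\<forall>a\<in>?B. (a(0 := d - mdeg (Suc m) a))(0 := 0) = a"
      unfolding FF_def by (auto simp: fun_eq_iff)
    show "(\<lambda>b. b(0 := 0)) ` ?A \<subseteq> ?B"
    proof
      fix x assume "x \<in> (\<lambda>b. b(0 := 0)) ` ?A"
      then obtain a where a: "a \<in> ?A" and x: "x = a(0 := 0)" by blast
      have am: "a \<in> mons (Suc m)" using a I_sub[OF s] by auto
      have "mdeg (Suc m) x \<le> mdeg (Suc m) a" using x by (intro mdeg_mono) (auto simp: le_fun_def)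
      then show "x \<in> ?B" unfolding FF_def using a x x0I[OF am] x0J[OF am] by auto
    qed
    show "(\<lambda>f. f(0 := d - mdeg (Suc m) f)) ` ?B \<subseteq> ?A"
    proof
      fix x assume "x \<in> (\<lambda>f. f(0 := d - mdeg (Suc m) f)) ` ?B"
      then obtain f where f: "f \<in> ?B" and x: "x = f(0 := d - mdeg (Suc m) f)" by blast
      have fm: "f \<in> mons (Suc m)" using f FF_sub by auto
      have xm: "x \<in> mons (Suc m)" using upd_mons[OF fm] x by simp
      have f0: "f 0 = 0" using f unfolding FF_def by simp
      have "x(0 := 0) = f" using x f0 by (auto simp: fun_eq_iff)
      then have "x \<in> ?I - J" using f x0I[OF xm] x0J[OF xm] unfolding FF_def by auto
      moreover have "mdeg (Suc m) x = d" using mdeg_upd[of 0 "Suc m" f "d - mdeg (Suc m) f"] f f0 x by simp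
      ultimately show "x \<in> ?A" by simp
    qed
  qed
  then show ?thesis by (rule bij_betw_same_card)
qed

end


lemma up_mono: "c' \<le> c \<Longrightarrow> up c' \<le> up c"
  unfolding le_fun_def up_def by auto

lemma mdeg_le_coord: "i \<le> n \<Longrightarrow> a i \<le> mdeg n a"
  unfolding mdeg_def by (intro member_le_sum) auto

context
  fixes m t :: nat and J :: "(nat \<Rightarrow> nat) set"
  assumes s: "satb (Suc m) J"
    and hC: "\<forall>c\<in>Itil m (I01 (Suc m) J). \<exists>c'\<in>Itil m (I01 (Suc m) J). c' \<le> c \<and> mdeg m c' \<le> t"
begin

lemma wlemma:
  assumes b: "b \<in> I01 (Suc m) J"
  shows "\<exists>w\<in>I01 (Suc m) J. w \<le> b(0:=0,1:=0) \<and> w 0 = 0 \<and> w 1 = 0 \<and> mdeg (Suc m) w \<le> t"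
proof -
  let ?I = "I01 (Suc m) J"
  let ?b = "b(0:=0,1:=0)"
  have bI: "?b \<in> ?I" using I_x1[OF s I_x0[OF s b]] .
  have bm: "?b \<in> mons (Suc m)" using bI I_sub[OF s] by blast
  have "up (down ?b) = ?b" using up_down[of ?b] by (auto simp: fun_eq_iff)
  then have "down ?b \<in> Itil m ?I" unfolding Itil_def using down_mons[OF bm] bI by simp
  then obtain c' where c': "c' \<in> Itil m ?I" "c' \<le> down ?b" "mdeg m c' \<le> t" using hC by blast
  have "up c' \<in> ?I" using c'(1) unfolding Itil_def by simp
  moreover have "up c' \<le> ?b" using up_mono[OF c'(2)] \<open>up (down ?b) = ?b\<close> by simp
  moreover have "up c' 0 = 0" by (simp add: up_def)
  moreover have "up c' 1 = 0"
  proof -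
    have "up c' 1 \<le> ?b 1" using \<open>up c' \<le> ?b\<close> unfolding le_fun_def by blast
    then show ?thesis by simp
  qed
  moreover have "mdeg (Suc m) (up c') \<le> t" using mdeg_up c'(3) by simp
  ultimately show ?thesis by blast
qed

lemma le_upd01: "w \<le> b(0:=0,1:=0) \<Longrightarrow> w \<le> (b::nat\<Rightarrow>nat)"
proof -
  assume a: "w \<le> b(0:=0,1:=0)"
  have "b(0:=0,1:=0) \<le> b" unfolding le_fun_def by auto
  with a show ?thesis by (rule order_trans)
qed

lemma FF_finite: "finite (FF (Suc m) J)"
proof -
  let ?I = "I01 (Suc m) J"
  let ?W = "{w \<in> ?I. w 0 = 0 \<and> w 1 = 0 \<and> mdeg (Suc m) w \<le> t}"
  have Wfin: "finite ?W" by (rule finite_subset[OF _ finite_mons_deg[of "Suc m" t]]) (use I_sub[OF s] in auto)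
  define k where "k w = (SOME k. w(1 := k) \<in> J)" for w
  have kJ: "w(1 := k w) \<in> J" if "w \<in> ?W" for w
  proof -
    have "\<exists>k. w(1 := k) \<in> J" using that unfolding I01_def by blast
    then show ?thesis unfolding k_def by (rule someI_ex)
  qed
  define K where "K = (\<Sum>w\<in>?W. k w)"
  have kK: "k w \<le> K" if "w \<in> ?W" for w unfolding K_def using Wfin that by (intro member_le_sum) auto
  have B: "borel (Suc m) J" using s unfolding satb_def by simp
  have bound: "f i \<le> t + K" if f: "f \<in> FF (Suc m) J" for f i
  proof -
    have fI: "f \<in> ?I" and fJ: "f \<notin> J" and f0: "f 0 = 0" using f unfolding FF_def by auto
    have fm: "f \<in> mons (Suc m)" using fI I_sub[OF s] by blast
    obtain w where w: "w \<in> ?I" "w \<le> f(0:=0,1:=0)" "w 0 = 0" "w 1 = 0" "mdeg (Suc m) w \<le> t"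
      using wlemma[OF fI] by blast
    have wW: "w \<in> ?W" using w by simp
    have wf: "w \<le> f" using le_upd01[OF w(2)] .
    have wJ: "w(1 := k w) \<in> J" using kJ[OF wW] .
    show ?thesis
    proof (cases "i = 0 \<or> i > Suc m")
      case True then show ?thesis using f0 fm unfolding mons_def by auto
    next
      case False
      then have i: "i \<ge> 1" "i \<le> Suc m" by auto
      show ?thesis
      proof (cases "i = 1")
        case True
        have "f 1 < k w"
        proof (rule ccontr)
          assume "\<not> f 1 < k w"
          then have "w(1 := k w) \<le> f" using wf unfolding le_fun_def by auto
          then have "f \<in> J" using satb_up[OF s wJ _ fm] by blast
          then show False using fJ by simp
        qed
        then show ?thesis using kK[OF wW] True by simp
      next
        case False
        then have i1: "1 < i" using i by simp
        have "f i < w i + k w"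
        proof (rule ccontr)
          assume "\<not> f i < w i + k w"
          have "(w(1 := k w))(1 := (w(1 := k w)) 1 - k w, i := (w(1 := k w)) i + k w) \<in> J"
            using borel_moveK[OF B i1 i(2) wJ, of "k w"] by (simp only: fun_upd_same order_refl)
          moreover have "(w(1 := k w))(1 := (w(1 := k w)) 1 - k w, i := (w(1 := k w)) i + k w)
             = w(i := w i + k w)" using i1 w(4) by (auto simp: fun_eq_iff)
          ultimately have "w(i := w i + k w) \<in> J" by simp
          moreover have "w(i := w i + k w) \<le> f" using wf \<open>\<not> f i < w i + k w\<close> unfolding le_fun_def by auto
          ultimately have "f \<in> J" using satb_up[OF s _ _ fm] by blast
          then show False using fJ by simp
        qed
        moreover have "w i \<le> t" using mdeg_le_coord[OF i(2), of w] w(5) by simp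
        ultimately show ?thesis using kK[OF wW] by simp
      qed
    qed
  qed
  have "FF (Suc m) J \<subseteq> {a \<in> mons (Suc m). mdeg (Suc m) a \<le> Suc (Suc m) * (t + K)}"
  proof
    fix f assume f: "f \<in> FF (Suc m) J"
    have "mdeg (Suc m) f \<le> (\<Sum>i\<le>Suc m. t + K)" unfolding mdeg_def
      using bound[OF f] by (intro sum_mono) auto
    then show "f \<in> {a \<in> mons (Suc m). mdeg (Suc m) a \<le> Suc (Suc m) * (t + K)}"
      using f FF_sub[OF s] by auto
  qed
  then show ?thesis using finite_mons_deg finite_subset by blast
qed

lemma chain_count:
  assumes f: "f \<in> FF (Suc m) J"
  shows "min d (mdeg (Suc m) f) + 1 - t \<le> card {v \<in> FF (Suc m) J. mdeg (Suc m) v \<le> d}"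
proof -
  let ?I = "I01 (Suc m) J"
  have fI: "f \<in> ?I" and fJ: "f \<notin> J" and f0: "f 0 = 0" using f unfolding FF_def by auto
  have fm: "f \<in> mons (Suc m)" using fI I_sub[OF s] by blast
  obtain w where w: "w \<in> ?I" "w \<le> f(0:=0,1:=0)" "w 0 = 0" "w 1 = 0" "mdeg (Suc m) w \<le> t"
    using wlemma[OF fI] by blast
  have wf: "w \<le> f" using le_upd01[OF w(2)] .
  have "min d (mdeg (Suc m) f) + 1 - mdeg (Suc m) w \<le> card {v \<in> FF (Suc m) J. mdeg (Suc m) v \<le> d}"
  proof (rule card_degs[where deg = "mdeg (Suc m)"])
    show "finite {v \<in> FF (Suc m) J. mdeg (Suc m) v \<le> d}" using FF_finite by simp
    fix e assume e: "mdeg (Suc m) w \<le> e" "e \<le> min d (mdeg (Suc m) f)"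
    obtain v where v: "w \<le> v" "v \<le> f" "mdeg (Suc m) v = e" using interpolate'[OF fm wf e(1)] e(2) by auto
    have vm: "v \<in> mons (Suc m)" using mons_le[OF fm v(2)] .
    have "v \<in> ?I" using I_up[OF s w(1) v(1) vm] .
    moreover have "v \<notin> J" using satb_up[OF s _ v(2) fm] fJ by blast
    moreover have "v 0 = 0"
    proof -
      have "v 0 \<le> f 0" using v(2) unfolding le_fun_def by blast
      then show ?thesis using f0 by simp
    qed
    ultimately show "\<exists>v'\<in>{v \<in> FF (Suc m) J. mdeg (Suc m) v \<le> d}. mdeg (Suc m) v' = e"
      using v(3) e(2) unfolding FF_def by auto
  qed
  then show ?thesis using w(5) by linarith
qed

lemma FF_deg: "f \<in> FF (Suc m) J \<Longrightarrow> mdeg (Suc m) f + 1 \<le> t + card (FF (Suc m) J)"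
proof -
  assume f: "f \<in> FF (Suc m) J"
  have "mdeg (Suc m) f + 1 - t \<le> card {v \<in> FF (Suc m) J. mdeg (Suc m) v \<le> mdeg (Suc m) f}"
    using chain_count[OF f, of "mdeg (Suc m) f"] by simp
  also have "\<dots> \<le> card (FF (Suc m) J)" using FF_finite by (intro card_mono) auto
  finally show ?thesis by linarith
qed

lemma gen_bound:
  assumes b: "b \<in> J"
  shows "\<exists>g\<in>J. g \<le> b \<and> mdeg (Suc m) g \<le> t + card (FF (Suc m) J)"
proof -
  let ?I = "I01 (Suc m) J"
  let ?b = "b(0:=0)"
  have bJ: "?b \<in> J" using satb_x0[OF s b] .
  have bI: "?b \<in> ?I" using J_sub_I[OF s] bJ by blast
  have bm: "?b \<in> mons (Suc m)" using bJ satb_sub[OF s] by blast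
  obtain w where w: "w \<in> ?I" "w \<le> ?b(0:=0,1:=0)" "w 0 = 0" "w 1 = 0" "mdeg (Suc m) w \<le> t"
    using wlemma[OF bI] by blast
  have wb: "w \<le> ?b" using le_upd01[OF w(2)] .
  let ?P = "\<lambda>g. g \<in> J \<and> w \<le> g \<and> g \<le> ?b"
  have "?P ?b" using bJ wb by simp
  define g where "g = arg_min (mdeg (Suc m)) ?P"
  have gP: "?P g" and gmin: "\<And>h. ?P h \<Longrightarrow> mdeg (Suc m) g \<le> mdeg (Suc m) h"
    using arg_min_nat_lemma[of ?P ?b "mdeg (Suc m)", OF \<open>?P ?b\<close>] unfolding g_def by auto
  have gm: "g \<in> mons (Suc m)" using gP satb_sub[OF s] by blast
  have "?b \<le> b" unfolding le_fun_def by auto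
  then have gb: "g \<le> b" using gP order_trans by blast
  show ?thesis
  proof (cases "mdeg (Suc m) g \<le> t")
    case True then show ?thesis using gP gb by auto
  next
    case False
    have "(mdeg (Suc m) g - 1) + 1 - mdeg (Suc m) w \<le> card (FF (Suc m) J)"
    proof (rule card_degs[where deg = "mdeg (Suc m)"])
      show "finite (FF (Suc m) J)" by (rule FF_finite)
      fix e assume e: "mdeg (Suc m) w \<le> e" "e \<le> mdeg (Suc m) g - 1"
      have wg: "w \<le> g" using gP by simp
      have "e \<le> mdeg (Suc m) g" using e(2) by linarith
      then obtain v where v: "w \<le> v" "v \<le> g" "mdeg (Suc m) v = e"
        using interpolate'[OF gm wg e(1)] by blast
      have vm: "v \<in> mons (Suc m)" using mons_le[OF gm v(2)] .
      have "v \<in> ?I" using I_up[OF s w(1) v(1) vm] .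
      moreover have "v \<notin> J"
      proof
        assume "v \<in> J"
        then have "?P v" using v gP order_trans by blast
        then have "mdeg (Suc m) g \<le> e" using gmin v(3) by auto
        then show False using e(2) False by linarith
      qed
      moreover have "v 0 = 0"
      proof -
        have "v 0 \<le> g 0" "g 0 \<le> ?b 0" using v(2) gP unfolding le_fun_def by blast+
        then show ?thesis by simp
      qed
      ultimately show "\<exists>v'\<in>FF (Suc m) J. mdeg (Suc m) v' = e"
        using v(3) unfolding FF_def by auto
    qed
    then have "mdeg (Suc m) g \<le> t + card (FF (Suc m) J)" using w(5) False by linarith
    then show ?thesis using gP gb by auto
  qed
qed

end


definition Gs :: "(nat \<Rightarrow> nat) \<Rightarrow> nat \<Rightarrow> nat \<Rightarrow> nat" where
  "Gs a r d = (\<Sum>i\<in>{1..r}. (d + a i - (i - 1)) choose a i)"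
definition Gt :: "(nat \<Rightarrow> nat) \<Rightarrow> nat \<Rightarrow> nat \<Rightarrow> nat" where
  "Gt a r d = (\<Sum>i\<in>{1..min r (Suc d)}. (d + a i - (i - 1)) choose a i)"
definition nonincr :: "(nat \<Rightarrow> nat) \<Rightarrow> nat \<Rightarrow> bool" where
  "nonincr a r \<longleftrightarrow> (\<forall>i j. 1 \<le> i \<longrightarrow> i \<le> j \<longrightarrow> j \<le> r \<longrightarrow> a j \<le> a i)"

definition good_with :: "nat \<Rightarrow> (nat \<Rightarrow> nat) set \<Rightarrow> (nat \<Rightarrow> nat) \<Rightarrow> nat \<Rightarrow> bool" where
  "good_with n J a r \<longleftrightarrow> nonincr a r \<and> (\<forall>d. Gt a r d \<le> hilb_fun n J d)
     \<and> (\<forall>d. r \<le> Suc d \<longrightarrow> hilb_fun n J d = Gs a r d)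
     \<and> (\<forall>b\<in>J. \<exists>g\<in>J. g \<le> b \<and> mdeg n g \<le> r)"

definition HH :: "(nat \<Rightarrow> nat) \<Rightarrow> nat \<Rightarrow> nat \<Rightarrow> nat" where
  "HH b t d = (\<Sum>i\<in>{1..min t (Suc d)}. (d + (b i + 1) - (i - 1)) choose (b i + 1))"

lemma pascal_step:
  assumes "i - 1 \<le> Suc d"
  shows "(Suc d + (x + 1) - (i - 1)) choose (x + 1) =
         ((Suc d + x - (i - 1)) choose x) + ((d + (x + 1) - (i - 1)) choose (x + 1))"
proof -
  define N where "N = Suc d + x - (i - 1)"
  have 1: "Suc d + (x + 1) - (i - 1) = Suc N" using assms unfolding N_def by simp
  have 2: "d + (x + 1) - (i - 1) = N" using assms unfolding N_def by simp
  show ?thesis unfolding 1 2 N_def[symmetric] by simp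
qed

lemma hockey: "(\<Sum>e\<le>d. Gt b t e) = HH b t d"
proof (induction d)
  case 0
  show ?case
  proof (cases t)
    case 0 then show ?thesis by (simp add: Gt_def HH_def)
  next
    case (Suc t') then show ?thesis by (simp add: Gt_def HH_def)
  qed
next
  case (Suc d)
  let ?S' = "{1..min t (Suc (Suc d))}"
  have "HH b t (Suc d) = (\<Sum>i\<in>?S'. ((Suc d + b i - (i - 1)) choose b i) + ((d + (b i + 1) - (i - 1)) choose (b i + 1)))"
    unfolding HH_def by (intro sum.cong refl pascal_step) auto
  also have "\<dots> = Gt b t (Suc d) + (\<Sum>i\<in>?S'. (d + (b i + 1) - (i - 1)) choose (b i + 1))"
    by (simp add: sum.distrib Gt_def)
  also have "(\<Sum>i\<in>?S'. (d + (b i + 1) - (i - 1)) choose (b i + 1)) = HH b t d"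
  proof (cases "t \<le> Suc d")
    case True
    then have eq: "?S' = {1..min t (Suc d)}" by (simp add: min_def)
    show ?thesis unfolding HH_def eq ..
  next
    case False
    then have e: "?S' = insert (Suc (Suc d)) {1..min t (Suc d)}" "min t (Suc d) = Suc d" by auto
    have "(d + (b (Suc (Suc d)) + 1) - (Suc (Suc d) - 1)) choose (b (Suc (Suc d)) + 1) = 0" by simp
    then show ?thesis unfolding HH_def e by simp
  qed
  finally show ?case using Suc.IH by simp
qed

lemma sum_eventually_zero:
  fixes N d :: nat
  assumes "\<And>e. N \<le> e \<Longrightarrow> g e = (0::nat)" and "N \<le> d"
  shows "(\<Sum>e\<le>d. g e) = (\<Sum>e<N. g e)"
proof -
  have "{..d} = {..<N} \<union> {N..d}" using assms(2) by (auto simp: not_le)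
  then have "(\<Sum>e\<le>d. g e) = sum g ({..<N} \<union> {N..d})" by simp
  also have "\<dots> = (\<Sum>e<N. g e) + (\<Sum>e\<in>{N..d}. g e)"
    by (rule sum.union_disjoint) auto
  also have "(\<Sum>e\<in>{N..d}. g e) = 0" using assms(1) by simp
  finally show ?thesis by simp
qed



lemma Gt_split:
  fixes b :: "nat \<Rightarrow> nat"
  assumes tr: "t \<le> r"
  shows "Gt (\<lambda>i. if i \<le> t then b i + 1 else 0) r d = HH b t d + (min r (Suc d) - t)"
proof -
  let ?a = "\<lambda>i. if i \<le> t then b i + 1 else 0"
  let ?M = "min r (Suc d)"
  let ?f = "\<lambda>i. (d + ?a i - (i - 1)) choose ?a i"
  have mt: "min t ?M = min t (Suc d)" using tr by (simp add: min_def)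
  have un: "{1..?M} = {1..min t ?M} \<union> {Suc t..?M}" by auto
  have "Gt ?a r d = sum ?f ({1..min t ?M} \<union> {Suc t..?M})" unfolding Gt_def using un by simp
  also have "\<dots> = sum ?f {1..min t ?M} + sum ?f {Suc t..?M}"
    by (rule sum.union_disjoint) auto
  also have "sum ?f {1..min t ?M} = HH b t d" unfolding HH_def mt
    by (rule sum.cong) auto
  also have "sum ?f {Suc t..?M} = (\<Sum>i\<in>{Suc t..?M}. 1)"
    by (rule sum.cong) auto
  also have "\<dots> = ?M - t" by simp
  finally show ?thesis .
qed

lemma step:
  assumes s: "satb (Suc m) J" and gI: "good_with m (Itil m (I01 (Suc m) J)) b t"
  shows "\<exists>a r. good_with (Suc m) J a r \<and> (\<forall>f\<in>FF (Suc m) J. mdeg (Suc m) f < r)"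
proof -
  let ?I = "I01 (Suc m) J"
  let ?T = "Itil m ?I"
  let ?F = "FF (Suc m) J"
  have nb: "nonincr b t" and gA: "\<And>d. Gt b t d \<le> hilb_fun m ?T d"
    and gB: "\<And>d. t \<le> Suc d \<Longrightarrow> hilb_fun m ?T d = Gs b t d"
    and gC: "\<forall>c\<in>?T. \<exists>c'\<in>?T. c' \<le> c \<and> mdeg m c' \<le> t"
    using gI unfolding good_with_def by auto
  define q where "q = card ?F"
  define phi where "phi d = card {f \<in> ?F. mdeg (Suc m) f \<le> d}" for d
  define diff where "diff e = hilb_fun m ?T e - Gt b t e" for e
  define c where "c = (\<Sum>e<t - 1. diff e)"
  define E where "E d = (\<Sum>e\<le>d. diff e)" for d
  have Ec: "E d = c" if "t \<le> Suc d" for d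
  proof -
    have "diff e = 0" if "t - 1 \<le> e" for e
    proof -
      have te: "t \<le> Suc e" using that by simp
      then have "Gt b t e = Gs b t e" unfolding Gt_def Gs_def by (simp add: min_def)
      then show ?thesis unfolding diff_def using gB[OF te] by simp
    qed
    moreover have "t - 1 \<le> d" using that by simp
    ultimately show ?thesis unfolding E_def c_def by (rule sum_eventually_zero)
  qed
  have HI: "hilb_fun (Suc m) ?I d = HH b t d + E d" for d
  proof -
    have "hilb_fun (Suc m) ?I d = (\<Sum>e\<le>d. Gt b t e + diff e)"
      unfolding HF_I[OF s] diff_def using gA by (intro sum.cong) (auto simp: le_add_diff_inverse)
    also have "\<dots> = HH b t d + E d" by (simp add: sum.distrib hockey E_def)
    finally show ?thesis .
  qed
  have HJ: "hilb_fun (Suc m) J d = HH b t d + E d + phi d" for d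
    using HF_J[OF s, of d] card_IJ[OF s, of d] HI[of d] unfolding phi_def by simp
  have hC: "\<forall>c\<in>?T. \<exists>c'\<in>?T. c' \<le> c \<and> mdeg m c' \<le> t" by (rule gC)
  have Ffin: "finite ?F" by (rule FF_finite[OF s hC])
  have phiq: "phi d \<le> q" for d unfolding phi_def q_def using Ffin by (intro card_mono) auto
  have Fdeg: "\<And>f. f \<in> ?F \<Longrightarrow> mdeg (Suc m) f + 1 \<le> t + q"
    using FF_deg[OF s hC] unfolding q_def by blast
  define a where "a i = (if i \<le> t then b i + 1 else 0)" for i
  define r where "r = t + c + q"
  have tr: "t \<le> r" unfolding r_def by simp
  have GtA: "Gt a r d = HH b t d + (min r (Suc d) - t)" for d
    unfolding a_def using Gt_split[OF tr] by simp
  have phi_all: "phi d = q" if "r \<le> Suc d" for d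
  proof -
    have "{f \<in> ?F. mdeg (Suc m) f \<le> d} = ?F" using Fdeg that unfolding r_def by fastforce
    then show ?thesis unfolding phi_def q_def by simp
  qed
  have "good_with (Suc m) J a r"
    unfolding good_with_def
  proof (intro conjI allI impI ballI)
    show "nonincr a r" using nb unfolding nonincr_def a_def by auto
  next
    fix d
    have "min r (Suc d) - t \<le> E d + phi d"
    proof (cases "Suc d \<le> t")
      case True then show ?thesis by simp
    next
      case False
      then have E: "E d = c" using Ec by simp
      show ?thesis
      proof (cases "phi d = q")
        case True then show ?thesis using E unfolding r_def by simp
      next
        case False
        have "\<exists>f\<in>?F. \<not> mdeg (Suc m) f \<le> d"
        proof (rule ccontr)
          assume "\<not> (\<exists>f\<in>?F. \<not> mdeg (Suc m) f \<le> d)"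
          then have "{f \<in> ?F. mdeg (Suc m) f \<le> d} = ?F" by auto
          then show False using False unfolding phi_def q_def by simp
        qed
        then obtain f where f: "f \<in> ?F" "d < mdeg (Suc m) f" by auto
        have "min d (mdeg (Suc m) f) + 1 - t \<le> phi d"
          using chain_count[OF s hC f(1)] unfolding phi_def by blast
        then have "Suc d - t \<le> phi d" using f(2) by simp
        then show ?thesis by linarith
      qed
    qed
    then show "Gt a r d \<le> hilb_fun (Suc m) J d" using GtA HJ by simp
  next
    fix d assume rd: "r \<le> Suc d"
    have "Gs a r d = Gt a r d" unfolding Gs_def Gt_def using rd by (simp add: min_def)
    also have "\<dots> = HH b t d + (r - t)" using GtA rd by (simp add: min_def)
    also have "r - t = E d + phi d" using Ec[of d] phi_all[OF rd] rd unfolding r_def by simp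
    finally show "hilb_fun (Suc m) J d = Gs a r d" using HJ by simp
  next
    fix x assume "x \<in> J"
    then obtain g where "g \<in> J" "g \<le> x" "mdeg (Suc m) g \<le> t + card ?F"
      using gen_bound[OF s hC] by blast
    then show "\<exists>g\<in>J. g \<le> x \<and> mdeg (Suc m) g \<le> r" unfolding r_def q_def by force
  qed
  moreover have "\<forall>f\<in>?F. mdeg (Suc m) f < r" using Fdeg unfolding r_def by fastforce
  ultimately show ?thesis by blast
qed



lemma mdeg0: "mdeg 0 a = a 0" unfolding mdeg_def by simp

lemma base:
  assumes s: "satb 0 J"
  shows "\<exists>a r. good_with 0 J a r"
proof (cases "J = {}")
  case True
  have "{a \<in> mons 0 - J. mdeg 0 a = d} = {(\<lambda>i. if i = 0 then d else 0)}" for d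
    using True unfolding mons_def mdeg0 by (auto simp: fun_eq_iff)
  then have hf: "hilb_fun 0 J d = 1" for d unfolding hilb_fun_def by simp
  have "good_with 0 J (\<lambda>_. 0) 1"
    unfolding good_with_def nonincr_def Gt_def Gs_def hf using True by auto
  then show ?thesis by blast
next
  case False
  then obtain b where b: "b \<in> J" by blast
  have "b(0:=0) \<in> J" using satb_x0[OF s b] .
  moreover have "b \<in> mons 0" using b satb_sub[OF s] by blast
  moreover have "b(0:=0) = (\<lambda>_. 0)"
  proof
    fix i show "(b(0:=0)) i = 0"
    proof (cases "i = 0")
      case False then show ?thesis using \<open>b \<in> mons 0\<close> unfolding mons_def by simp
    qed simp
  qed
  ultimately have z: "(\<lambda>_. 0) \<in> J" by simp
  have Jall: "J = mons 0"
  proof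
    show "J \<subseteq> mons 0" using satb_sub[OF s] .
    show "mons 0 \<subseteq> J"
    proof
      fix x assume "x \<in> mons 0"
      moreover have "(\<lambda>_. 0) \<le> x" unfolding le_fun_def by simp
      ultimately show "x \<in> J" using satb_up[OF s z] by blast
    qed
  qed
  have hf: "hilb_fun 0 J d = 0" for d unfolding hilb_fun_def Jall by simp
  have "good_with 0 J (\<lambda>_. 0) 0"
    unfolding good_with_def nonincr_def Gt_def Gs_def hf
  proof (intro conjI allI impI ballI)
    fix x assume "x \<in> J"
    then show "\<exists>g\<in>J. g \<le> x \<and> mdeg 0 g \<le> 0" using z by (auto simp: le_fun_def mdeg0)
  qed auto
  then show ?thesis by blast
qed

lemma all_good: "satb n J \<Longrightarrow> \<exists>a r. good_with n J a r"
proof (induction n arbitrary: J)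
  case 0 then show ?case by (rule base)
next
  case (Suc m)
  have "satb m (Itil m (I01 (Suc m) J))" using Itil_satb[OF Suc.prems] .
  then obtain b t where "good_with m (Itil m (I01 (Suc m) J)) b t" using Suc.IH by blast
  then show ?case using step[OF Suc.prems] by blast
qed



lemma choose_ge: "1 \<le> k \<Longrightarrow> z + 1 \<le> (z + k) choose k"
proof (induction k)
  case 0 then show ?case by simp
next
  case (Suc k)
  show ?case
  proof (cases "k = 0")
    case True then show ?thesis by simp
  next
    case False
    then have "z + 1 \<le> (z + k) choose k" using Suc.IH by simp
    also have "\<dots> \<le> (z + Suc k) choose Suc k" by simp
    finally show ?thesis .
  qed
qed

lemma Gs_flat: "(\<forall>i. 1 \<le> i \<longrightarrow> i \<le> r \<longrightarrow> a i = 0) \<Longrightarrow> Gs a r z = r"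
  unfolding Gs_def by simp

lemma Gs_ge_first: "1 \<le> r \<Longrightarrow> (z + a 1) choose (a 1) \<le> Gs a r z"
  unfolding Gs_def
  using member_le_sum[of 1 "{1..r}" "\<lambda>i. (z + a i - (i - 1)) choose a i"] by simp

lemma split_pos: "nonincr a r \<Longrightarrow> \<exists>s\<le>r. \<forall>i. 1 \<le> i \<longrightarrow> i \<le> r \<longrightarrow> (0 < a i \<longleftrightarrow> i \<le> s)"
proof (induction r)
  case 0 then show ?case by simp
next
  case (Suc r)
  have "nonincr a r" using Suc.prems unfolding nonincr_def by simp
  then obtain s where s: "s \<le> r" "\<forall>i. 1 \<le> i \<longrightarrow> i \<le> r \<longrightarrow> (0 < a i \<longleftrightarrow> i \<le> s)" using Suc.IH by blast
  show ?case
  proof (cases "0 < a (Suc r)")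
    case True
    have "\<forall>i. 1 \<le> i \<longrightarrow> i \<le> Suc r \<longrightarrow> 0 < a i"
    proof (intro allI impI)
      fix i assume "1 \<le> i" "i \<le> Suc r"
      then have "a (Suc r) \<le> a i" using Suc.prems unfolding nonincr_def by blast
      then show "0 < a i" using True by simp
    qed
    then show ?thesis by auto
  next
    case False
    then show ?thesis using s by (intro exI[of _ s]) (auto simp: le_Suc_eq)
  qed
qed

lemma Gs_tail:
  assumes sr: "s \<le> r" and sp: "\<forall>i. 1 \<le> i \<longrightarrow> i \<le> r \<longrightarrow> (0 < a i \<longleftrightarrow> i \<le> s)"
  shows "Gs a r z = Gs a s z + (r - s)"
proof -
  let ?f = "\<lambda>i. (z + a i - (i - 1)) choose a i"
  have "{1..r} = {1..s} \<union> {Suc s..r}" using sr by auto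
  then have "Gs a r z = sum ?f ({1..s} \<union> {Suc s..r})" unfolding Gs_def by simp
  also have "\<dots> = sum ?f {1..s} + sum ?f {Suc s..r}" by (rule sum.union_disjoint) auto
  also have "sum ?f {Suc s..r} = (\<Sum>i\<in>{Suc s..r}. 1)"
  proof (rule sum.cong)
    fix i assume i: "i \<in> {Suc s..r}"
    then have "1 \<le> i" "i \<le> r" "\<not> i \<le> s" by auto
    then have "a i = 0" using sp by blast
    then show "?f i = 1" by simp
  qed simp
  finally show ?thesis unfolding Gs_def by simp
qed

lemma Gs_diff:
  assumes sr: "s \<le> r" and sp: "\<forall>i. 1 \<le> i \<longrightarrow> i \<le> r \<longrightarrow> (0 < a i \<longleftrightarrow> i \<le> s)" and rz: "r \<le> z"
  shows "Gs a r (Suc z) = Gs a r z + Gs (\<lambda>i. a i - 1) s (Suc z)"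
proof -
  have "Gs a s (Suc z) = (\<Sum>i\<in>{1..s}. ((Suc z + (a i - 1) - (i - 1)) choose (a i - 1))
       + ((z + (a i - 1 + 1) - (i - 1)) choose (a i - 1 + 1)))"
    unfolding Gs_def
  proof (rule sum.cong)
    fix i assume i: "i \<in> {1..s}"
    then have ai: "a i = a i - 1 + 1" using sp sr by auto
    have "i - 1 \<le> Suc z" using i sr rz by auto
    from pascal_step[OF this, of "a i - 1"] ai
    show "(Suc z + a i - (i - 1)) choose a i = ((Suc z + (a i - 1) - (i - 1)) choose (a i - 1))
       + ((z + (a i - 1 + 1) - (i - 1)) choose (a i - 1 + 1))" by simp
  qed simp
  also have "\<dots> = Gs (\<lambda>i. a i - 1) s (Suc z) + Gs a s z"
    unfolding Gs_def sum.distrib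
  proof (intro arg_cong2[where f = "(+)"] refl sum.cong)
    fix i assume i: "i \<in> {1..s}"
    then have ai: "a i = a i - 1 + 1" using sp sr by auto
    show "(z + (a i - 1 + 1) - (i - 1)) choose (a i - 1 + 1) = (z + a i - (i - 1)) choose a i"
      using ai by simp
  qed
  finally show ?thesis using Gs_tail[OF sr sp, of z] Gs_tail[OF sr sp, of "Suc z"] by simp
qed

lemma uniq:
  "nonincr a r \<Longrightarrow> nonincr a' r' \<Longrightarrow> \<forall>z\<ge>N. Gs a r z = Gs a' r' z
   \<Longrightarrow> r = r' \<and> (\<forall>i. 1 \<le> i \<longrightarrow> i \<le> r \<longrightarrow> a i = a' i)"
proof (induction "a 1 + a' 1" arbitrary: a r a' r' N rule: less_induct)
  case less
  note na = less.prems(1) and na' = less.prems(2) and eq = less.prems(3)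
  have flat_of: "\<forall>i. 1 \<le> i \<longrightarrow> i \<le> rr \<longrightarrow> aa i = 0" if "nonincr aa rr" "rr = 0 \<or> aa 1 = 0" for aa rr
  proof (intro allI impI)
    fix i assume "1 \<le> i" "i \<le> rr"
    then have "aa i \<le> aa 1" using that(1) unfolding nonincr_def by auto
    then show "aa i = 0" using that(2) \<open>1 \<le> i\<close> \<open>i \<le> rr\<close> by auto
  qed
  have big: False if fl: "nonincr aa rr" "rr = 0 \<or> aa 1 = 0" and nf: "1 \<le> rr'" "1 \<le> aa' 1"
     and e: "\<forall>z\<ge>N. Gs aa rr z = Gs aa' rr' z" for aa rr aa' rr'
  proof -
    let ?z = "N + rr"
    have "Gs aa rr ?z = rr" using Gs_flat[OF flat_of[OF fl]] .
    moreover have "?z + 1 \<le> (?z + aa' 1) choose (aa' 1)" using choose_ge[OF nf(2)] .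
    moreover have "(?z + aa' 1) choose (aa' 1) \<le> Gs aa' rr' ?z" using Gs_ge_first[OF nf(1)] .
    moreover have "Gs aa rr ?z = Gs aa' rr' ?z" using e by simp
    ultimately show False by linarith
  qed
  show ?case
  proof (cases "r = 0 \<or> a 1 = 0")
    case fa: True
    show ?thesis
    proof (cases "r' = 0 \<or> a' 1 = 0")
      case fa': True
      have "Gs a r N = r" "Gs a' r' N = r'" using Gs_flat[OF flat_of[OF na fa]] Gs_flat[OF flat_of[OF na' fa']] by auto
      then have "r = r'" using eq by auto
      then show ?thesis using flat_of[OF na fa] flat_of[OF na' fa'] by auto
    next
      case False
      then have "1 \<le> r'" "1 \<le> a' 1" by auto
      then show ?thesis using big[OF na fa _ _ eq] by blast
    qed
  next
    case nfa: False
    show ?thesis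
    proof (cases "r' = 0 \<or> a' 1 = 0")
      case fa': True
      have "1 \<le> r" "1 \<le> a 1" using nfa by auto
      moreover have "\<forall>z\<ge>N. Gs a' r' z = Gs a r z" using eq by simp
      ultimately show ?thesis using big[OF na' fa'] by blast
    next
      case nfa': False
      obtain s where s: "s \<le> r" "\<forall>i. 1 \<le> i \<longrightarrow> i \<le> r \<longrightarrow> (0 < a i \<longleftrightarrow> i \<le> s)"
        using split_pos[OF na] by blast
      obtain s' where s': "s' \<le> r'" "\<forall>i. 1 \<le> i \<longrightarrow> i \<le> r' \<longrightarrow> (0 < a' i \<longleftrightarrow> i \<le> s')"
        using split_pos[OF na'] by blast
      let ?b = "\<lambda>i. a i - 1" and ?b' = "\<lambda>i. a' i - 1"
      let ?N = "Suc (N + r + r')"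
      have eqb: "\<forall>z\<ge>?N. Gs ?b s z = Gs ?b' s' z"
      proof (intro allI impI)
        fix z assume z: "?N \<le> z"
        then obtain y where y: "z = Suc y" "N + r + r' \<le> y" by (cases z) auto
        have "Gs a r (Suc y) = Gs a r y + Gs ?b s (Suc y)" using Gs_diff[OF s(1) s(2)] y by simp
        moreover have "Gs a' r' (Suc y) = Gs a' r' y + Gs ?b' s' (Suc y)" using Gs_diff[OF s'(1) s'(2)] y by simp
        moreover have "Gs a r (Suc y) = Gs a' r' (Suc y)" "Gs a r y = Gs a' r' y" using eq y by auto
        ultimately show "Gs ?b s z = Gs ?b' s' z" using y by simp
      qed
      have nb: "nonincr ?b s" using na s unfolding nonincr_def by (auto intro: diff_le_mono)
      have nb': "nonincr ?b' s'" using na' s' unfolding nonincr_def by (auto intro: diff_le_mono)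
      have "?b 1 + ?b' 1 < a 1 + a' 1" using nfa nfa' by auto
      from less.hyps[OF this nb nb' eqb]
      have ss: "s = s'" and bb: "\<forall>i. 1 \<le> i \<longrightarrow> i \<le> s \<longrightarrow> ?b i = ?b' i" by auto
      have aa: "a i = a' i" if "1 \<le> i" "i \<le> s" for i
      proof -
        have "0 < a i" "0 < a' i" using s s' ss that by auto
        then show ?thesis using bb that by auto
      qed
      have "Gs a s N = Gs a' s N" unfolding Gs_def using aa by (intro sum.cong) auto
      moreover have "Gs a r N = Gs a s N + (r - s)" using Gs_tail[OF s(1) s(2)] .
      moreover have "Gs a' r' N = Gs a' s N + (r' - s)" using Gs_tail[OF s'(1) s'(2)] ss by simp
      moreover have "Gs a r N = Gs a' r' N" using eq by simp
      ultimately have rr: "r = r'" using s(1) s'(1) ss by linarith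
      have "a i = a' i" if "1 \<le> i" "i \<le> r" for i
      proof (cases "i \<le> s")
        case True then show ?thesis using aa that by simp
      next
        case False
        then have "\<not> 0 < a i" "\<not> 0 < a' i" using s(2) s'(2) ss rr that by blast+
        then have "a i = 0" "a' i = 0" by auto
        then show ?thesis by simp
      qed
      then show ?thesis using rr by blast
    qed
  qed
qed



lemma FF_sum:
  assumes s: "satb (Suc m) J" and fin: "finite (min_gens J)"
  shows "card (FF (Suc m) J) = (\<Sum>g\<in>min_gens J. g 1)"
proof -
  let ?S = "Sigma (min_gens J) (\<lambda>g. {1..g 1})"
  let ?h = "\<lambda>(g, j). g(1 := g 1 - j)"
  have B: "borel (Suc m) J" using s unfolding satb_def by simp
  have mgJ: "g \<in> J" if "g \<in> min_gens J" for g using that unfolding min_gens_def by simp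
  have mgmin: "b = g" if "g \<in> min_gens J" "b \<in> J" "b \<le> g" for g b
    using that unfolding min_gens_def by blast
  have inj: "inj_on ?h ?S"
  proof (rule inj_onI)
    fix x y assume x: "x \<in> ?S" and y: "y \<in> ?S" and e: "?h x = ?h y"
    obtain g j where gj: "x = (g, j)" "g \<in> min_gens J" "1 \<le> j" "j \<le> g 1" using x by auto
    obtain g' j' where gj': "y = (g', j')" "g' \<in> min_gens J" "1 \<le> j'" "j' \<le> g' 1" using y by auto
    have e': "g(1 := g 1 - j) = g'(1 := g' 1 - j')" using e gj gj' by simp
    have off: "g i = g' i" if "i \<noteq> 1" for i
    proof -
      have "(g(1 := g 1 - j)) i = (g'(1 := g' 1 - j')) i" using e' by simp
      then show ?thesis using that by simp
    qed
    have "g = g'"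
    proof (cases "g 1 \<le> g' 1")
      case True
      then have "g \<le> g'" using off unfolding le_fun_def by (metis order_refl)
      then show ?thesis using mgmin[OF gj'(2) mgJ[OF gj(2)]] by simp
    next
      case False
      then have "g' \<le> g" using off unfolding le_fun_def by (metis order_refl nat_le_linear)
      then show ?thesis using mgmin[OF gj(2) mgJ[OF gj'(2)]] by simp
    qed
    moreover have "g 1 - j = g' 1 - j'" using e' by (metis fun_upd_same)
    ultimately have "j = j'" using gj gj' by simp
    then show "x = y" using gj gj' \<open>g = g'\<close> by simp
  qed
  have img: "?h ` ?S = FF (Suc m) J"
  proof
    show "?h ` ?S \<subseteq> FF (Suc m) J"
    proof
      fix v assume "v \<in> ?h ` ?S"
      then obtain g j where g: "g \<in> min_gens J" "1 \<le> j" "j \<le> g 1" and v: "v = g(1 := g 1 - j)" by auto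
      have gJ: "g \<in> J" using mgJ[OF g(1)] .
      have gm: "g \<in> mons (Suc m)" using gJ satb_sub[OF s] by blast
      have vm: "v \<in> mons (Suc m)" using upd_mons[OF gm] v by simp
      have "v(1 := g 1) = g" using v by simp
      then have "v \<in> I01 (Suc m) J" unfolding I01_def using vm gJ by (intro CollectI conjI exI[of _ "g 1"]) auto
      moreover have "v \<notin> J"
      proof
        assume "v \<in> J"
        moreover have "v \<le> g" using v unfolding le_fun_def by auto
        ultimately have "v = g" using mgmin[OF g(1)] by blast
        then have "g 1 - j = g 1" using v by (metis fun_upd_same)
        then show False using g by simp
      qed
      moreover have "v 0 = 0" using min_gen_x0[OF s g(1)] v by simp
      ultimately show "v \<in> FF (Suc m) J" unfolding FF_def by simp
    qed
  next
    show "FF (Suc m) J \<subseteq> ?h ` ?S"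
    proof
      fix f assume f: "f \<in> FF (Suc m) J"
      have fI: "f \<in> I01 (Suc m) J" and fJ: "f \<notin> J" and f0: "f 0 = 0" using f unfolding FF_def by auto
      have fm: "f \<in> mons (Suc m)" using fI unfolding I01_def by simp
      have ex: "\<exists>k. f(1 := k) \<in> J" using fI unfolding I01_def by simp
      define l where "l = (LEAST k. f(1 := k) \<in> J)"
      have lJ: "f(1 := l) \<in> J" unfolding l_def using ex by (rule LeastI_ex)
      have lmin: "\<not> f(1 := k) \<in> J" if "k < l" for k using that unfolding l_def by (rule not_less_Least)
      have lf: "f 1 < l"
      proof (rule ccontr)
        assume "\<not> f 1 < l"
        then have "f(1 := l) \<le> f" unfolding le_fun_def by auto
        then have "f \<in> J" using satb_up[OF s lJ _ fm] by blast
        then show False using fJ by simp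
      qed
      let ?g = "f(1 := l)"
      have gm: "?g \<in> mons (Suc m)" using upd_mons[OF fm] by simp
      have "?g \<in> min_gens J"
        unfolding min_gens_def
      proof (intro CollectI conjI ballI impI)
        show "?g \<in> J" by (rule lJ)
        fix b assume bJ: "b \<in> J" and bg: "b \<le> ?g"
        show "b = ?g"
        proof (rule ccontr)
          assume ne: "b \<noteq> ?g"
          show False
          proof (cases "b 1 < l")
            case True
            have "b \<le> f(1 := b 1)" using bg unfolding le_fun_def by (auto split: if_splits)
            moreover have "f(1 := b 1) \<in> mons (Suc m)" using upd_mons[OF fm] by simp
            ultimately have "f(1 := b 1) \<in> J" using satb_up[OF s bJ] by blast
            then show False using lmin[OF True] by simp
          next
            case False
            then have b1: "b 1 = l" using bg unfolding le_fun_def by (metis fun_upd_same le_antisym not_less)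
            obtain j where j: "b j \<noteq> ?g j" using ne by (auto simp: fun_eq_iff)
            have jlt: "b j < ?g j" using j bg unfolding le_fun_def using le_neq_implies_less by blast
            have j1: "j \<noteq> 1" using j b1 by auto
            have j0: "j \<noteq> 0"
            proof
              assume "j = 0"
              then have "?g j = 0" using f0 by simp
              then show False using jlt by simp
            qed
            have jn: "j \<le> Suc m"
            proof (rule ccontr)
              assume "\<not> j \<le> Suc m"
              then have "?g j = 0" using gm unfolding mons_def by simp
              then show False using jlt by simp
            qed
            let ?h = "?g(j := ?g j - 1)"
            have "b \<le> ?h" using bg jlt j1 unfolding le_fun_def by auto
            moreover have "?h \<in> mons (Suc m)" using upd_mons[OF gm jn] by simp
            ultimately have hJ: "?h \<in> J" using satb_up[OF s bJ] by blast
            have "0 < ?h 1" using lf j1 by simp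
            moreover have "1 < j" using j0 j1 by simp
            ultimately have "?h(1 := ?h 1 - 1, j := ?h j + 1) \<in> J"
              using borel_move1[OF B hJ _ jn] by blast
            moreover have "?h(1 := ?h 1 - 1, j := ?h j + 1) = f(1 := l - 1)"
              using j1 jlt by (auto simp: fun_eq_iff)
            ultimately have "f(1 := l - 1) \<in> J" by simp
            moreover have "l - 1 < l" using lf by simp
            ultimately show False using lmin by blast
          qed
        qed
      qed
      moreover have "1 \<le> l - f 1" "l - f 1 \<le> ?g 1" using lf by auto
      moreover have "?h (?g, l - f 1) = f" using lf by (auto simp: fun_eq_iff)
      ultimately show "f \<in> ?h ` ?S" by (intro image_eqI[of _ _ "(?g, l - f 1)"]) auto
    qed
  qed
  have "card (FF (Suc m) J) = card ?S" using card_image[OF inj] img by simp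
  also have "\<dots> = (\<Sum>g\<in>min_gens J. card {1..g 1})" using fin by (intro card_SigmaI) auto
  finally show ?thesis by simp
qed



theorem mainTheorem10:
  fixes n r :: nat and J :: "(nat \<Rightarrow> nat) set" and p :: "real poly"
  assumes "1 \<le> n"
    and "borel n J"
    and "sat n J = J"
    and "is_hilb_poly n J p"
    and "gotzmann_number p r"
  shows "is_hilb_poly n (sat01 n J)
           (p - [: real_of_int (int (dim_deg n (sat01 n J) r) - int (dim_deg n J r)) :])
         \<and> int (dim_deg n (sat01 n J) r) - int (dim_deg n J r) = int (\<Sum>a\<in>min_gens J. a 1)"
proof -
  obtain m where n: "n = Suc m" using assms(1) by (cases n) auto
  have s: "satb (Suc m) J" using sat_imp_satb[OF assms(2) assms(3)] n by simp
  have "satb m (Itil m (I01 (Suc m) J))" using Itil_satb[OF s] .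
  then obtain b t where "good_with m (Itil m (I01 (Suc m) J)) b t" using all_good by blast
  then obtain a' r' where g: "good_with (Suc m) J a' r'" and Fr: "\<forall>f\<in>FF (Suc m) J. mdeg (Suc m) f < r'"
    using step[OF s] by blast
  have na': "nonincr a' r'" and gB: "\<And>d. r' \<le> Suc d \<Longrightarrow> hilb_fun (Suc m) J d = Gs a' r' d"
    and gC: "\<forall>b\<in>J. \<exists>g\<in>J. g \<le> b \<and> mdeg (Suc m) g \<le> r'"
    using g unfolding good_with_def by auto
  obtain a where na: "nonincr a r" and ea: "\<forall>\<^sub>F z in sequentially. poly p (real z) =
        (\<Sum>i=1..r. real ((z + a i - (i - 1)) choose (a i)))"
    using assms(5) unfolding gotzmann_number_def nonincr_def by blast
  have eh: "\<forall>\<^sub>F z in sequentially. real (hilb_fun (Suc m) J z) = poly p (real z)"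
    using assms(4) n unfolding is_hilb_poly_def by simp
  obtain N1 where N1: "\<And>z. N1 \<le> z \<Longrightarrow> real (hilb_fun (Suc m) J z) = poly p (real z)"
    using eh unfolding eventually_sequentially by blast
  obtain N2 where N2: "\<And>z. N2 \<le> z \<Longrightarrow> poly p (real z) = (\<Sum>i=1..r. real ((z + a i - (i - 1)) choose (a i)))"
    using ea unfolding eventually_sequentially by blast
  have eqG: "\<forall>z\<ge>N1 + N2 + r'. Gs a r z = Gs a' r' z"
  proof (intro allI impI)
    fix z assume z: "N1 + N2 + r' \<le> z"
    have "real (hilb_fun (Suc m) J z) = real (Gs a r z)"
      using N1[of z] N2[of z] z unfolding Gs_def by (simp add: of_nat_sum)
    then have "hilb_fun (Suc m) J z = Gs a r z" by (simp only: of_nat_eq_iff)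
    moreover have "hilb_fun (Suc m) J z = Gs a' r' z" using gB z by simp
    ultimately show "Gs a r z = Gs a' r' z" by simp
  qed
  have rr: "r = r'" using uniq[OF na na' eqG] by simp
  let ?I = "I01 (Suc m) J"
  let ?F = "FF (Suc m) J"
  have I: "sat01 n J = ?I" using sat01_eq[OF s] n by simp
  have Fall: "card {f \<in> ?F. mdeg (Suc m) f \<le> d} = card ?F" if "r \<le> d" for d
  proof -
    have "{f \<in> ?F. mdeg (Suc m) f \<le> d} = ?F" using Fr rr that by fastforce
    then show ?thesis by simp
  qed
  have IJd: "card {b \<in> ?I - J. mdeg (Suc m) b = d} = card ?F" if "r \<le> d" for d
    using card_IJ[OF s, of d] Fall[OF that] by simp
  have dd: "dim_deg (Suc m) ?I r = dim_deg (Suc m) J r + card {b \<in> ?I - J. mdeg (Suc m) b = r}"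
  proof -
    have "{a \<in> ?I. mdeg (Suc m) a = r} = {a \<in> J. mdeg (Suc m) a = r} \<union> {b \<in> ?I - J. mdeg (Suc m) b = r}"
      using J_sub_I[OF s] by auto
    moreover have "finite {a \<in> J. mdeg (Suc m) a = r}" by (rule finite_deg_sub[OF satb_sub[OF s]])
    moreover have "finite {b \<in> ?I - J. mdeg (Suc m) b = r}" by (rule finite_deg_sub) (use I_sub[OF s] in auto)
    ultimately show ?thesis unfolding dim_deg_def by (simp add: card_Un_disjoint disjoint_iff)
  qed
  have q: "int (dim_deg n (sat01 n J) r) - int (dim_deg n J r) = int (card ?F)"
    using dd IJd[of r] I n by simp
  have fin: "finite (min_gens J)"
  proof (rule finite_subset[OF _ finite_mons_deg[of "Suc m" r']])
    show "min_gens J \<subseteq> {a \<in> mons (Suc m). mdeg (Suc m) a \<le> r'}"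
    proof
      fix g assume g: "g \<in> min_gens J"
      then have gJ: "g \<in> J" unfolding min_gens_def by simp
      then obtain h where h: "h \<in> J" "h \<le> g" "mdeg (Suc m) h \<le> r'" using gC by blast
      have "h = g" using g h unfolding min_gens_def by blast
      then show "g \<in> {a \<in> mons (Suc m). mdeg (Suc m) a \<le> r'}" using h gJ satb_sub[OF s] by auto
    qed
  qed
  have sumq: "card ?F = (\<Sum>g\<in>min_gens J. g 1)" using FF_sum[OF s fin] .
  have hp: "is_hilb_poly n (sat01 n J) (p - [: real_of_int (int (card ?F)) :])"
    unfolding is_hilb_poly_def eventually_sequentially
  proof (intro exI allI impI)
    fix z assume z: "N1 + r \<le> z"
    have "hilb_fun (Suc m) J z = hilb_fun (Suc m) ?I z + card ?F"
      using HF_J[OF s, of z] IJd[of z] z by simp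
    then have "real (hilb_fun (Suc m) ?I z) = real (hilb_fun (Suc m) J z) - real (card ?F)" by simp
    also have "\<dots> = poly p (real z) - real (card ?F)" using N1[of z] z by simp
    finally show "real (hilb_fun n (sat01 n J) z) = poly (p - [:real_of_int (int (card ?F)):]) (real z)"
      using I n by simp
  qed
  show ?thesis using hp q sumq by simp
qed


end
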